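(* For $p\in[0,1]$ let $M_7(p)$ be the $7\times 7$ row-stochastic matrix $$M_7(p)=\mathbb{I}_5\oplus\begin{pmatrix}p&1-p\\ \tfrac p3&1-\tfrac p3\end{pmatrix},$$ i.e. $[M_7(p)]_{ij}=\delta_{ij}$ for $i,j\le 5$, $[M_7(p)]_{66}=p$, $[M_7(p)]_{67}=1-p$, $[M_7(p)]_{76}=p/3$, $[M_7(p)]_{77}=1-p/3$, and all other entries $0$. Then $\operatorname{rank}_{\mathrm{psd}}(M_7(p))=7$ for every $p\in(0,1]$.
   Context: The psd rank of a nonnegative $n\times m$ matrix $M$, $\operatorname{rank}_{\mathrm{psd}}(M)$, is the smallest $r$ such that there exist $r\times r$ positive semidefinite matrices $R_1,\dots,R_n$ and $C_1,\dots,C_m$ with $M_{ij}=\operatorname{Tr}(R_iC_j)$ for all $i,j$. *)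

theory Defs
  imports Complex_Main
begin

text \<open>Matrices of varying size are represented as functions nat => nat => real,
  with only the entries with indices below the stated dimensions being relevant
  (indices are 0-based).\<close>

definition psd_mat :: "nat \<Rightarrow> (nat \<Rightarrow> nat \<Rightarrow> real) \<Rightarrow> bool" where
  "psd_mat r A \<longleftrightarrow>
     (\<forall>i<r. \<forall>j<r. A i j = A j i) \<and>
     (\<forall>x :: nat \<Rightarrow> real. 0 \<le> (\<Sum>i<r. \<Sum>j<r. x i * A i j * x j))"

definition mat_trace_prod :: "nat \<Rightarrow> (nat \<Rightarrow> nat \<Rightarrow> real) \<Rightarrow> (nat \<Rightarrow> nat \<Rightarrow> real) \<Rightarrow> real" where
  "mat_trace_prod r A B = (\<Sum>i<r. \<Sum>j<r. A i j * B j i)"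

definition psd_factorization :: "nat \<Rightarrow> nat \<Rightarrow> nat \<Rightarrow> (nat \<Rightarrow> nat \<Rightarrow> real) \<Rightarrow> bool" where
  "psd_factorization r n m M \<longleftrightarrow>
     (\<exists>R C :: nat \<Rightarrow> nat \<Rightarrow> nat \<Rightarrow> real.
        (\<forall>i<n. psd_mat r (R i)) \<and> (\<forall>j<m. psd_mat r (C j)) \<and>
        (\<forall>i<n. \<forall>j<m. M i j = mat_trace_prod r (R i) (C j)))"

definition psd_rank :: "nat \<Rightarrow> nat \<Rightarrow> (nat \<Rightarrow> nat \<Rightarrow> real) \<Rightarrow> nat" where
  "psd_rank n m M = (LEAST r. psd_factorization r n m M)"

definition M7 :: "real \<Rightarrow> nat \<Rightarrow> nat \<Rightarrow> real" where
  "M7 p i j =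
     (if i < 5 \<and> j < 5 then (if i = j then 1 else 0)
      else if i = 5 \<and> j = 5 then p
      else if i = 5 \<and> j = 6 then 1 - p
      else if i = 6 \<and> j = 5 then p / 3
      else if i = 6 \<and> j = 6 then 1 - p / 3
      else 0)"

end

theory Submission imports Defs "Jordan_Normal_Form.Determinant" begin


lemma dep_exists:
  fixes f :: "nat \<Rightarrow> nat \<Rightarrow> real"
  assumes "r < n"
  shows "\<exists>x::nat\<Rightarrow>real. (\<exists>b<n. x b \<noteq> 0) \<and> (\<forall>a<r. (\<Sum>b<n. f b a * x b) = 0)"
proof -
  define A :: "real mat" where "A = mat n n (\<lambda>(a,b). if a < r then f b a else 0)"
  have Ac: "A \<in> carrier_mat n n" by (simp add: A_def)
  have "det A = 0"
  proof -
    have "(\<Prod>i = 0..<n. A $$ (i, p i)) = 0" if "p permutes {0..<n}" for p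
    proof -
      have "p (n-1) < n" using that assms using permutes_in_image[OF that, of "n-1"] by auto
      then have "A $$ (n-1, p (n-1)) = 0" using assms by (simp add: A_def)
      then show ?thesis using assms by (intro prod_zero) (auto intro!: bexI[of _ "n-1"])
    qed
    then show ?thesis unfolding det_def using Ac by (simp del: prod_zero_iff)
  qed
  then obtain v where v: "v \<in> carrier_vec n" "v \<noteq> 0\<^sub>v n" "A *\<^sub>v v = 0\<^sub>v n"
    using det_0_iff_vec_prod_zero[OF Ac] by auto
  have "\<exists>b<n. v $ b \<noteq> 0"
  proof (rule ccontr)
    assume "\<not> ?thesis"
    then have "v = 0\<^sub>v n" using v(1) by (intro eq_vecI) auto
    then show False using v(2) by simp
  qed
  moreover have "(\<Sum>b<n. f b a * v $ b) = 0" if "a < r" for a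
  proof -
    have "(A *\<^sub>v v) $ a = 0" using v(3) that assms by simp
    moreover have "(A *\<^sub>v v) $ a = (\<Sum>b<n. f b a * v $ b)"
      using that assms v(1) Ac
      by (simp add: A_def scalar_prod_def row_def lessThan_atLeast0)
    ultimately show ?thesis by simp
  qed
  ultimately show ?thesis by (intro exI[of _ "\<lambda>b. v $ b"]) auto
qed



lemma sd1: "(\<Sum>j<(n::nat). (f j::real) * (if j = a then 1 else 0)) = (if a < n then f a else 0)"
proof -
  have "(\<Sum>j<n. (f j::real) * (if j = a then 1 else 0)) = (\<Sum>j<n. if j = a then f j else 0)"
    by (intro sum.cong) auto
  also have "\<dots> = (if a < n then f a else 0)" by simp
  finally show ?thesis .
qed
lemma sd2: "(\<Sum>j<(n::nat). (if j = a then 1 else 0) * (f j::real)) = (if a < n then f a else 0)"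
  using sd1[where n=n and f=f and a=a] by (simp add: mult.commute)

definition bil :: "nat \<Rightarrow> (nat \<Rightarrow> nat \<Rightarrow> real) \<Rightarrow> (nat \<Rightarrow> real) \<Rightarrow> (nat \<Rightarrow> real) \<Rightarrow> real" where
  "bil r A x y = (\<Sum>i<r. \<Sum>j<r. x i * A i j * y j)"

lemma bil_expand:
  "bil r A (\<lambda>i. x i + t * y i) (\<lambda>i. x i + t * y i)
   = bil r A x x + t * (bil r A x y + bil r A y x) + t^2 * bil r A y y"
  by (simp add: bil_def algebra_simps sum.distrib sum_distrib_left power2_eq_square)

lemma psd_bil_nonneg: "psd_mat r A \<Longrightarrow> 0 \<le> bil r A x x"
  by (simp add: psd_mat_def bil_def)

lemma bil_mv_right: "bil r A x y = (\<Sum>i<r. x i * (\<Sum>j<r. A i j * y j))"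
  by (simp add: bil_def sum_distrib_left mult.assoc)

lemma bil_sym: assumes "psd_mat r A" shows "bil r A x y = bil r A y x"
proof -
  have s: "\<And>i j. i < r \<Longrightarrow> j < r \<Longrightarrow> A i j = A j i" using assms by (simp add: psd_mat_def)
  have "bil r A x y = (\<Sum>i<r. \<Sum>j<r. y j * A j i * x i)"
    unfolding bil_def by (intro sum.cong refl) (simp add: s)
  also have "\<dots> = bil r A y x" unfolding bil_def by (rule sum.swap)
  finally show ?thesis .
qed

lemma psd_quad_zero:
  assumes A: "psd_mat r A" and q: "bil r A x x = 0" and a: "a < r"
  shows "(\<Sum>j<r. A a j * x j) = 0"
proof -
  define z where "z = (\<lambda>i. \<Sum>j<r. A i j * x j)"
  define S where "S = (\<Sum>i<r. z i * z i)"
  have zx: "bil r A z x = S" unfolding S_def z_def bil_mv_right ..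
  have xz: "bil r A x z = S" using zx bil_sym[OF A] by simp
  have S0: "S \<ge> 0" unfolding S_def by (intro sum_nonneg) simp
  define Q where "Q = bil r A z z"
  have Q0: "Q \<ge> 0" unfolding Q_def using psd_bil_nonneg[OF A] .
  have "S = 0"
  proof (rule ccontr)
    assume "S \<noteq> 0"
    with S0 have Sp: "S > 0" by simp
    define t where "t = - S / (Q + 1)"
    have "0 \<le> bil r A (\<lambda>i. x i + t * z i) (\<lambda>i. x i + t * z i)"
      using psd_bil_nonneg[OF A] .
    also have "\<dots> = t * (2 * S) + t^2 * Q" unfolding bil_expand q zx xz Q_def by simp
    also have "\<dots> = S^2 / (Q+1) * (Q / (Q + 1) - 2)"
      unfolding t_def using Q0 by (simp add: divide_simps power2_eq_square) (simp add: algebra_simps)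
    also have "\<dots> < 0"
    proof -
      have "Q / (Q+1) < 1" using Q0 by simp
      then have "Q / (Q + 1) - 2 < 0" by simp
      moreover have "S^2 / (Q+1) > 0" using Sp Q0 by simp
      ultimately show ?thesis by (intro mult_pos_neg)
    qed
    finally show False by simp
  qed
  then have "z a * z a = 0" unfolding S_def using a
    by (subst (asm) sum_nonneg_eq_0_iff) auto
  then show ?thesis unfolding z_def by simp
qed

lemma psd_restrict: assumes "psd_mat (Suc r) B" shows "psd_mat r B"
  unfolding psd_mat_def
proof (intro conjI allI impI)
  fix i j assume "i < r" "j < r" then show "B i j = B j i" using assms by (simp add: psd_mat_def)
next
  fix x :: "nat \<Rightarrow> real"
  define y where "y = x(r := 0)"
  have yr: "y r = 0" by (simp add: y_def)
  have "0 \<le> bil (Suc r) B y y" using psd_bil_nonneg[OF assms] .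
  also have "\<dots> = bil r B y y" unfolding bil_def by (simp add: yr)
  also have "\<dots> = bil r B x x" unfolding bil_def by (intro sum.cong refl) (simp add: y_def)
  finally show "0 \<le> (\<Sum>i<r. \<Sum>j<r. x i * B i j * x j)" unfolding bil_def .
qed

lemma psd_zero_diag:
  assumes A: "psd_mat r B" and a: "a < r" and d: "B a a = 0" and j: "j < r"
  shows "B j a = 0" "B a j = 0"
proof -
  define e where "e = (\<lambda>i::nat. if i = a then (1::real) else 0)"
  have "bil r B e e = B a a" using a unfolding bil_mv_right e_def sd1 sd2 by simp
  then have "(\<Sum>k<r. B j k * e k) = 0" using psd_quad_zero[OF A _ j, of e] d by simp
  then show "B j a = 0" using a unfolding e_def sd1 by simp
  then show "B a j = 0" using A a j by (simp add: psd_mat_def)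
qed

lemma psd_schur:
  assumes A: "psd_mat (Suc r) B" and d: "B r r > 0"
  shows "psd_mat (Suc r) (\<lambda>i j. B i j - B i r * B j r / B r r)"
  unfolding psd_mat_def
proof (intro conjI allI impI)
  fix i j assume "i < Suc r" "j < Suc r" then show "B i j - B i r * B j r / B r r = B j i - B j r * B i r / B r r"
    using A by (simp add: psd_mat_def)
next
  fix x :: "nat \<Rightarrow> real"
  let ?n = "Suc r"
  define e where "e = (\<lambda>i::nat. if i = r then (1::real) else 0)"
  define s where "s = (\<Sum>i<?n. x i * B i r)"
  have xe: "bil ?n B x e = s" unfolding bil_mv_right s_def e_def sd1 by simp
  have ex: "bil ?n B e x = s" using xe bil_sym[OF A] by simp
  have ee: "bil ?n B e e = B r r" unfolding bil_mv_right e_def sd1 sd2 by simp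
  define t where "t = - s / B r r"
  have "0 \<le> bil ?n B (\<lambda>i. x i + t * e i) (\<lambda>i. x i + t * e i)" using psd_bil_nonneg[OF A] .
  also have "\<dots> = bil ?n B x x + t * (2 * s) + t^2 * B r r" unfolding bil_expand xe ex ee by simp
  also have "\<dots> = bil ?n B x x - s * s / B r r" unfolding t_def using d
    by (simp add: field_simps power2_eq_square)
  finally have 1: "0 \<le> bil ?n B x x - s * s / B r r" .
  have "(\<Sum>i<?n. \<Sum>j<?n. x i * (B i j - B i r * B j r / B r r) * x j)
      = bil ?n B x x - (\<Sum>i<?n. \<Sum>j<?n. (x i * B i r) * (x j * B j r)) / B r r"
    unfolding bil_def sum_divide_distrib sum_subtractf[symmetric]
    by (intro sum.cong refl) (simp add: algebra_simps)
  also have "(\<Sum>i<?n. \<Sum>j<?n. (x i * B i r) * (x j * B j r)) = s * s"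
    unfolding s_def sum_product ..
  finally show "0 \<le> (\<Sum>i<?n. \<Sum>j<?n. x i * (B i j - B i r * B j r / B r r) * x j)" using 1 by simp
qed

lemma psd_diag:
  assumes A: "psd_mat r B" and a: "a < r" shows "B a a \<ge> 0"
proof -
  define e where "e = (\<lambda>i::nat. if i = a then (1::real) else 0)"
  have "bil r B e e = B a a" using a unfolding bil_mv_right e_def sd1 sd2 by simp
  then show ?thesis using psd_bil_nonneg[OF A, of e] by simp
qed

lemma psd_decomp: "psd_mat r B \<Longrightarrow> \<exists>K G. \<forall>i<r. \<forall>j<r. B i j = (\<Sum>k<(K::nat). G k i * G k j)"
proof (induction r arbitrary: B)
  case 0 show ?case by auto
next
  case (Suc r)
  have zero_case: "\<exists>K G. \<forall>i<Suc r. \<forall>j<Suc r. B' i j = (\<Sum>k<(K::nat). G k i * G k j)"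
    if B': "psd_mat (Suc r) B'" "B' r r = 0" for B'
  proof -
    from Suc.IH[OF psd_restrict[OF B'(1)]] obtain K G
      where KG: "\<forall>i<r. \<forall>j<r. B' i j = (\<Sum>k<(K::nat). G k i * G k j)" by blast
    define G' where "G' = (\<lambda>k i. if i < r then G k i else 0)"
    show ?thesis
    proof (intro exI allI impI)
      fix i j assume i: "i < Suc r" and j: "j < Suc r"
      show "B' i j = (\<Sum>k<K. G' k i * G' k j)"
      proof (cases "i = r \<or> j = r")
        case True
        then have "B' i j = 0" using psd_zero_diag[OF B'(1) _ B'(2)] i j by auto
        moreover have "(\<Sum>k<K. G' k i * G' k j) = 0" using True by (auto simp: G'_def)
        ultimately show ?thesis by simp
      next
        case False
        then have "i < r" "j < r" using i j by auto
        then show ?thesis using KG by (simp add: G'_def)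
      qed
    qed
  qed
  show ?case
  proof (cases "B r r = 0")
    case True then show ?thesis using zero_case[OF Suc.prems] by blast
  next
    case False
    have d: "B r r > 0" using psd_diag[OF Suc.prems, of r] False by simp
    define B' where "B' = (\<lambda>i j. B i j - B i r * B j r / B r r)"
    have "psd_mat (Suc r) B'" using psd_schur[OF Suc.prems d] by (simp add: B'_def)
    moreover have "B' r r = 0" using d by (simp add: B'_def)
    ultimately obtain K G where KG: "\<forall>i<Suc r. \<forall>j<Suc r. B' i j = (\<Sum>k<(K::nat). G k i * G k j)"
      using zero_case by blast
    define g where "g = (\<lambda>i. B i r / sqrt (B r r))"
    define G2 where "G2 = (\<lambda>k. if k < K then G k else g)"
    show ?thesis
    proof (intro exI[of _ "Suc K"] exI[of _ G2] allI impI)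
      fix i j assume i: "i < Suc r" and j: "j < Suc r"
      have "(\<Sum>k<Suc K. G2 k i * G2 k j) = (\<Sum>k<K. G2 k i * G2 k j) + g i * g j"
        by (simp add: G2_def)
      also have "(\<Sum>k<K. G2 k i * G2 k j) = (\<Sum>k<K. G k i * G k j)"
        by (intro sum.cong refl) (simp add: G2_def)
      also have "\<dots> = B' i j" using KG i j by simp
      also have "g i * g j = B i r * B j r / B r r" using d
        by (simp add: g_def field_simps real_sqrt_mult_self)
      finally show "B i j = (\<Sum>k<Suc K. G2 k i * G2 k j)" by (simp add: B'_def)
    qed
  qed
qed

lemma trace_decomp:
  assumes "\<forall>i<r. \<forall>j<r. C i j = (\<Sum>k<(K::nat). G k i * G k j)"
  shows "mat_trace_prod r R C = (\<Sum>k<K. bil r R (G k) (G k))"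
proof -
  have "mat_trace_prod r R C = (\<Sum>a<r. \<Sum>b<r. \<Sum>k<K. G k a * R a b * G k b)"
    unfolding mat_trace_prod_def using assms
    by (intro sum.cong refl) (simp add: sum_distrib_left algebra_simps)
  also have "\<dots> = (\<Sum>k<K. bil r R (G k) (G k))"
    unfolding bil_def by (simp add: sum.swap[where A="{..<K}"])
  finally show ?thesis .
qed


definition dg :: "(nat \<Rightarrow> real) \<Rightarrow> nat \<Rightarrow> nat \<Rightarrow> real" where
  "dg d = (\<lambda>a b. if a = b then d a else 0)"

lemma dg_sum: "(\<Sum>b<(n::nat). f b * (if a = b then c else 0) * g b) = (if a < n then f a * (c::real) * g a else 0)"
proof -
  have "(\<Sum>b<n. f b * (if a = b then c else 0) * g b) = (\<Sum>b<n. if a = b then f a * c * g a else 0)"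
    by (intro sum.cong) auto
  also have "\<dots> = (if a < n then f a * c * g a else 0)" by simp
  finally show ?thesis .
qed

lemma psd_dg: assumes "\<forall>a<n. d a \<ge> 0" shows "psd_mat n (dg d)"
  unfolding psd_mat_def
proof (intro conjI allI impI)
  fix i j show "dg d i j = dg d j i" by (simp add: dg_def)
next
  fix x :: "nat \<Rightarrow> real"
  have "(\<Sum>i<n. \<Sum>j<n. x i * dg d i j * x j) = (\<Sum>i<n. x i * d i * x i)"
    unfolding dg_def dg_sum by (intro sum.cong refl) simp
  also have "\<dots> \<ge> 0" using assms by (intro sum_nonneg) (simp add: mult.commute mult.left_commute)
  finally show "0 \<le> (\<Sum>i<n. \<Sum>j<n. x i * dg d i j * x j)" .
qed

lemma trace_dg: "mat_trace_prod n (dg d1) (dg d2) = (\<Sum>a<n. d1 a * d2 a)"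
proof -
  have "mat_trace_prod n (dg d1) (dg d2) = (\<Sum>a<n. \<Sum>b<n. 1 * (if a = b then d1 a else 0) * (if b = a then d2 b else 0))"
    unfolding mat_trace_prod_def dg_def by simp
  also have "\<dots> = (\<Sum>a<n. d1 a * d2 a)"
    by (intro sum.cong refl) (simp add: if_distrib[where f="\<lambda>v. v * _"] cong: if_cong)
  finally show ?thesis .
qed

lemma bil_lin:
  "bil r A y (\<lambda>a. \<Sum>b<(m::nat). f b a * x b) = (\<Sum>b<m. x b * bil r A y (f b))"
  unfolding bil_def by (simp add: sum_distrib_left sum_distrib_right algebra_simps sum.swap[where A="{..<m}"])

lemma bil_kill:
  assumes "\<forall>a<r. (\<Sum>b<r. A a b * v b) = 0" shows "bil r A y v = 0"
  unfolding bil_mv_right using assms by simp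

lemma bil_scale:
  assumes "\<forall>a<r. v a = c * w a" shows "bil r A v v = c^2 * bil r A w w"
  unfolding bil_def sum_distrib_left using assms
  by (intro sum.cong refl) (simp add: power2_eq_square algebra_simps)

lemma M7_nonneg: assumes "0 < p" "p \<le> 1" shows "M7 p i j \<ge> 0"
  using assms unfolding M7_def by auto

lemma upper: assumes "0 < p" "p \<le> 1" shows "psd_factorization 7 7 7 (M7 p)"
  unfolding psd_factorization_def
proof (intro exI conjI allI impI)
  fix i :: nat assume "i < 7"
  show "psd_mat 7 (dg (M7 p i))" using M7_nonneg[OF assms] by (intro psd_dg) auto
next
  fix j :: nat assume "j < 7"
  show "psd_mat 7 (dg (\<lambda>a. if a = j then 1 else 0))" by (intro psd_dg) auto
next
  fix i j :: nat assume "i < 7" "j < 7"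
  then show "M7 p i j = mat_trace_prod 7 (dg (M7 p i)) (dg (\<lambda>a. if a = j then 1 else 0))"
    unfolding trace_dg sd1 by simp
qed

lemma lower:
  assumes p: "0 < p" "p \<le> 1" and F: "psd_factorization r 7 7 (M7 p)" shows "7 \<le> r"
proof (rule ccontr)
  assume "\<not> 7 \<le> r" hence r7: "r < 7" by simp
  from F obtain R C where R: "\<forall>i<7. psd_mat r (R i)" and C: "\<forall>j<7. psd_mat r (C j)"
    and M: "\<forall>i<7. \<forall>j<7. M7 p i j = mat_trace_prod r (R i) (C j)"
    unfolding psd_factorization_def by blast
  have "\<forall>j. \<exists>kg. j < 7 \<longrightarrow> (\<forall>a<r. \<forall>b<r. C j a b = (\<Sum>k<(fst kg::nat). snd kg k a * snd kg k b))"
  proof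
    fix j
    show "\<exists>kg. j < 7 \<longrightarrow> (\<forall>a<r. \<forall>b<r. C j a b = (\<Sum>k<(fst kg::nat). snd kg k a * snd kg k b))"
    proof (cases "j < 7")
      case True
      then obtain K G where "\<forall>a<r. \<forall>b<r. C j a b = (\<Sum>k<(K::nat). G k a * G k b)"
        using psd_decomp C by blast
      then show ?thesis by (intro exI[of _ "(K, G)"]) simp
    qed simp
  qed
  from choice[OF this] obtain KG where KG: "\<forall>j. j < 7 \<longrightarrow> (\<forall>a<r. \<forall>b<r. C j a b = (\<Sum>k<(fst (KG j)::nat). snd (KG j) k a * snd (KG j) k b))"
    by blast
  define K where "K j = fst (KG j)" for j
  define G where "G j = snd (KG j)" for j
  have T: "M7 p i j = (\<Sum>k<K j. bil r (R i) (G j k) (G j k))" if "i < 7" "j < 7" for i j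
    using M that trace_decomp[where r=r and C="C j" and K="K j" and G="G j" and R="R i"] KG unfolding K_def G_def by simp
  have nn: "0 \<le> bil r (R i) y y" if "i < 7" for i y using psd_bil_nonneg R that by blast
  have kill: "\<forall>a<r. (\<Sum>b<r. R i a b * G j k b) = 0"
    if ij: "i < 7" "j < 7" and z: "M7 p i j = 0" and k: "k < K j" for i j k
  proof -
    have "(\<Sum>k<K j. bil r (R i) (G j k) (G j k)) = 0" using T[OF ij] z by simp
    then have "bil r (R i) (G j k) (G j k) = 0"
      using k nn[OF ij(1)] by (subst (asm) sum_nonneg_eq_0_iff) auto
    then show ?thesis using psd_quad_zero R ij(1) by blast
  qed
  have pos: "\<exists>k<K j. bil r (R i) (G j k) (G j k) > 0"
    if ij: "i < 7" "j < 7" and z: "M7 p i j > 0" for i j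
  proof (rule ccontr)
    assume "\<not> ?thesis"
    then have "(\<Sum>k<K j. bil r (R i) (G j k) (G j k)) \<le> 0" by (intro sum_nonpos) auto
    then show False using T[OF ij] z by simp
  qed
  have "\<forall>j. \<exists>k. j < 5 \<longrightarrow> k < K j \<and> bil r (R j) (G j k) (G j k) > 0"
  proof
    fix j show "\<exists>k. j < 5 \<longrightarrow> k < K j \<and> bil r (R j) (G j k) (G j k) > 0"
    proof (cases "j < 5")
      case True
      then have "M7 p j j > 0" by (simp add: M7_def)
      then show ?thesis using pos[of j j] True by auto
    qed simp
  qed
  from choice[OF this] obtain kk where kk: "\<forall>j. j < 5 \<longrightarrow> kk j < K j \<and> bil r (R j) (G j (kk j)) (G j (kk j)) > 0"
    by blast
  define u where "u j = G j (kk j)" for j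
  obtain k5 where k5: "k5 < K 5" "bil r (R 5) (G 5 k5) (G 5 k5) > 0"
    using pos[of 5 5] p by (auto simp: M7_def)
  define w where "w = G 5 k5"
  have "\<exists>j k. (j = 5 \<or> j = 6) \<and> k < K j \<and> \<not> (\<exists>c. \<forall>a<r. G j k a = c * w a)"
  proof (rule ccontr)
    assume H: "\<not> ?thesis"
    have alpha: "\<exists>\<alpha>. \<forall>i<7. M7 p i j = \<alpha> * bil r (R i) w w" if j: "j = 5 \<or> j = 6" for j
    proof -
      have "\<forall>k. \<exists>c. k < K j \<longrightarrow> (\<forall>a<r. G j k a = c * w a)" using H j by blast
      from choice[OF this] obtain cf where cf: "\<forall>k. k < K j \<longrightarrow> (\<forall>a<r. G j k a = cf k * w a)"
        by blast
      show ?thesis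
      proof (intro exI allI impI)
        fix i :: nat assume i: "i < 7"
        have "M7 p i j = (\<Sum>k<K j. bil r (R i) (G j k) (G j k))" using T i j by auto
        also have "\<dots> = (\<Sum>k<K j. (cf k)^2 * bil r (R i) w w)"
          using cf by (intro sum.cong refl bil_scale) auto
        also have "\<dots> = (\<Sum>k<K j. (cf k)^2) * bil r (R i) w w" by (simp add: sum_distrib_right)
        finally show "M7 p i j = (\<Sum>k<K j. (cf k)^2) * bil r (R i) w w" .
      qed
    qed
    obtain a5 where a5: "\<forall>i<7. M7 p i 5 = a5 * bil r (R i) w w" using alpha by blast
    obtain a6 where a6: "\<forall>i<7. M7 p i 6 = a6 * bil r (R i) w w" using alpha by blast
    have "M7 p 5 5 * M7 p 6 6 = M7 p 5 6 * M7 p 6 5" using a5 a6 by simp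
    then have "p * (1 - p / 3) = (1 - p) * (p / 3)" by (simp add: M7_def)
    then have "p = 0" by (simp add: algebra_simps)
    then show False using p by simp
  qed
  then obtain j0 k0 where jk0: "j0 = 5 \<or> j0 = 6" "k0 < K j0" "\<not> (\<exists>c. \<forall>a<r. G j0 k0 a = c * w a)"
    by blast
  define v where "v = G j0 k0"
  define vec where "vec b = (if b < 5 then u b else if b = 5 then w else v)" for b
  obtain x where x: "\<exists>b<7. x b \<noteq> 0" "\<forall>a<r. (\<Sum>b<7. vec b a * x b) = 0"
    using dep_exists[OF r7, of vec] by blast
  have killvec: "\<forall>a<r. (\<Sum>c<r. R i a c * vec b c) = 0" if i: "i < 5" and b: "b < 7" "b \<noteq> i" for i b
  proof -
    consider "b < 5" | "b = 5" | "b = 6" using b by linarith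
    then show ?thesis
    proof cases
      case 1
      then show ?thesis using kill[of i b "kk b"] kk i b by (simp add: vec_def u_def M7_def)
    next
      case 2
      then show ?thesis using kill[of i 5 k5] k5 i by (simp add: vec_def w_def M7_def)
    next
      case 3
      then show ?thesis using kill[of i j0 k0] jk0 i by (auto simp add: vec_def v_def M7_def)
    qed
  qed
  define z where "z = (\<lambda>a. \<Sum>b<7. vec b a * x b)"
  have z0: "bil r A y z = 0" for A y unfolding bil_def z_def using x(2) by simp
  have x04: "x i = 0" if i: "i < 5" for i
  proof -
    have "0 = bil r (R i) (u i) z" using z0 by simp
    also have "\<dots> = (\<Sum>b<7. x b * bil r (R i) (u i) (vec b))" unfolding z_def bil_lin ..
    also have "\<dots> = x i * bil r (R i) (u i) (vec i) + (\<Sum>b\<in>{..<7} - {i}. x b * bil r (R i) (u i) (vec b))"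
      using i by (subst sum.remove[of _ i]) auto
    also have "(\<Sum>b\<in>{..<7} - {i}. x b * bil r (R i) (u i) (vec b)) = 0"
      using killvec[OF i] bil_kill by (intro sum.neutral) auto
    finally have "x i * bil r (R i) (u i) (u i) = 0" using i by (simp add: vec_def)
    moreover have "bil r (R i) (u i) (u i) > 0" using kk i by (simp add: u_def)
    ultimately show ?thesis by simp
  qed
  have set7: "{..<7::nat} = {0,1,2,3,4,5,6}" by auto
  have zw: "x 5 * w a + x 6 * v a = 0" if "a < r" for a
    using x(2) that x04[of 0] x04[of 1] x04[of 2] x04[of 3] x04[of 4]
    unfolding set7 by (simp add: vec_def mult.commute)
  have x6: "x 6 = 0"
  proof (rule ccontr)
    assume "x 6 \<noteq> 0"
    have "\<forall>a<r. G j0 k0 a = (- x 5 / x 6) * w a"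
    proof (intro allI impI)
      fix a assume "a < r"
      from zw[OF this] have "x 6 * v a = - (x 5 * w a)" by simp
      then show "G j0 k0 a = (- x 5 / x 6) * w a" using \<open>x 6 \<noteq> 0\<close>
        unfolding v_def by (simp add: field_simps)
    qed
    then show False using jk0(3) by blast
  qed
  have "\<exists>a<r. w a \<noteq> 0"
  proof (rule ccontr)
    assume "\<not> ?thesis"
    then have "bil r (R 5) w w = 0" unfolding bil_def by simp
    then show False using k5 unfolding w_def by simp
  qed
  then obtain a where "a < r" "w a \<noteq> 0" by blast
  then have x5: "x 5 = 0" using zw[of a] x6 by simp
  from x(1) obtain b where b: "b < 7" "x b \<noteq> 0" by blast
  then have "b < 5 \<or> b = 5 \<or> b = 6" by linarith
  then show False using b x04 x5 x6 by auto
qed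

theorem lemma4:
  fixes p :: real
  assumes "0 < p" and "p \<le> 1"
  shows "psd_rank 7 7 (M7 p) = 7"
  unfolding psd_rank_def
proof (rule Least_equality)
  show "psd_factorization 7 7 7 (M7 p)" using upper assms .
next
  fix y assume "psd_factorization y 7 7 (M7 p)"
  then show "7 \<le> y" using lower assms by blast
qed

end
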